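(* Let $m\geq 3$ and $n\geq 2$ be integers with $m\leq n$, let $K_m$ and $K_n$ be the complete graphs of orders $m$ and $n$. Then $rvcl(K_m\diamond K_n)=n+1$ if $n\geq |E(K_m)|-1$, and $rvcl(K_m\diamond K_n)=n+2$ if $n<|E(K_m)|-1$, where $|E(K_m)|=m(m-1)/2$.
   Context: All graphs are finite, simple, connected and undirected; $d$ denotes graph distance. A rainbow vertex $k$-coloring of $G$ is a map $c:V(G)\to\{1,\dots,k\}$ such that every two vertices are joined by a path whose internal vertices all receive distinct colors. For such $c$ let $R_i=c^{-1}(i)$; the rainbow code of $v$ is $(d(v,R_1),\dots,d(v,R_k))$ with $d(v,R_i)=\min_{x\in R_i}d(v,x)$. A locating rainbow $k$-coloring is a rainbow vertex $k$-coloring in which distinct vertices have distinct rainbow codes; $rvcl(G)$ is the least $k$ for which one exists. For graphs $G_m$ (order $m$) and $H_n$ (order $n$) on disjoint vertex sets, the edge corona $G_m\diamond H_n$ is obtained from one copy of $G_m$ and $|E(G_m)|$ vertex-disjoint copies of $H_n$, one per edge of $G_m$, by joining both end vertices of the $j$-th edge of $G_m$ to every vertex of the $j$-th copy of $H_n$. *)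

theory Defs
  imports Main "HOL-Library.Extended_Nat"
begin

type_synonym 'a graph = "'a set \<times> 'a set set"

definition verts :: "'a graph \<Rightarrow> 'a set" where "verts G = fst G"
definition edges :: "'a graph \<Rightarrow> 'a set set" where "edges G = snd G"

definition simple_graph :: "'a graph \<Rightarrow> bool" where
  "simple_graph G \<longleftrightarrow> finite (verts G) \<and>
     (\<forall>e\<in>edges G. \<exists>u v. e = {u, v} \<and> u \<noteq> v \<and> u \<in> verts G \<and> v \<in> verts G)"

definition is_path :: "'a graph \<Rightarrow> 'a \<Rightarrow> 'a \<Rightarrow> 'a list \<Rightarrow> bool" where
  "is_path G u v p \<longleftrightarrow> p \<noteq> [] \<and> hd p = u \<and> last p = v \<and> distinct p \<and>
     set p \<subseteq> verts G \<and> (\<forall>i. Suc i < length p \<longrightarrow> {p ! i, p ! Suc i} \<in> edges G)"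

definition connected_graph :: "'a graph \<Rightarrow> bool" where
  "connected_graph G \<longleftrightarrow> verts G \<noteq> {} \<and>
     (\<forall>u\<in>verts G. \<forall>v\<in>verts G. \<exists>p. is_path G u v p)"

definition gdist :: "'a graph \<Rightarrow> 'a \<Rightarrow> 'a \<Rightarrow> nat" where
  "gdist G u v = (LEAST k. \<exists>p. is_path G u v p \<and> length p = Suc k)"

text \<open>Distance from a vertex to a set of vertices (infinite for the empty set).\<close>
definition setdist :: "'a graph \<Rightarrow> 'a \<Rightarrow> 'a set \<Rightarrow> enat" where
  "setdist G v R = (INF x\<in>R. enat (gdist G v x))"

definition rainbow_vertex_coloring :: "'a graph \<Rightarrow> nat \<Rightarrow> ('a \<Rightarrow> nat) \<Rightarrow> bool" where
  "rainbow_vertex_coloring G k c \<longleftrightarrow>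
     (\<forall>v\<in>verts G. c v \<in> {1..k}) \<and>
     (\<forall>u\<in>verts G. \<forall>v\<in>verts G. \<exists>p. is_path G u v p \<and> distinct (map c (butlast (tl p))))"

definition color_class :: "'a graph \<Rightarrow> ('a \<Rightarrow> nat) \<Rightarrow> nat \<Rightarrow> 'a set" where
  "color_class G c i = {x \<in> verts G. c x = i}"

definition rainbow_code :: "'a graph \<Rightarrow> nat \<Rightarrow> ('a \<Rightarrow> nat) \<Rightarrow> 'a \<Rightarrow> enat list" where
  "rainbow_code G k c v = map (\<lambda>i. setdist G v (color_class G c i)) [1..<Suc k]"

definition locating_rainbow_coloring :: "'a graph \<Rightarrow> nat \<Rightarrow> ('a \<Rightarrow> nat) \<Rightarrow> bool" where
  "locating_rainbow_coloring G k c \<longleftrightarrow> rainbow_vertex_coloring G k c \<and>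
     inj_on (rainbow_code G k c) (verts G)"

definition rvcl :: "'a graph \<Rightarrow> nat" where
  "rvcl G = (LEAST k. \<exists>c. locating_rainbow_coloring G k c)"

definition complete_graph :: "nat \<Rightarrow> nat graph" where
  "complete_graph n = ({0..<n}, {{i, j} | i j. i < n \<and> j < n \<and> i \<noteq> j})"

text \<open>Edge corona G \<diamond> H: a copy of G (vertices Inl x) and, for each edge e of G,
  a copy of H (vertices Inr (e, y)), with both ends of e joined to every vertex
  of the copy of H indexed by e.\<close>
definition edge_corona :: "'a graph \<Rightarrow> 'b graph \<Rightarrow> ('a + ('a set \<times> 'b)) graph" where
  "edge_corona G H =
    (Inl ` verts G \<union> {Inr (e, y) | e y. e \<in> edges G \<and> y \<in> verts H},
     (\<lambda>e. Inl ` e) ` edges G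
     \<union> {(\<lambda>y. Inr (e, y)) ` f | e f. e \<in> edges G \<and> f \<in> edges H}
     \<union> {{Inl x, Inr (e, y)} | x e y. e \<in> edges G \<and> x \<in> e \<and> y \<in> verts H})"

end

theory Submission
  imports Defs
begin


lemma path1: "u \<in> verts G \<Longrightarrow> is_path G u u [u]"
  by (auto simp: is_path_def)

lemma path2: "u \<in> verts G \<Longrightarrow> v \<in> verts G \<Longrightarrow> u \<noteq> v \<Longrightarrow> {u,v} \<in> edges G \<Longrightarrow> is_path G u v [u,v]"
  by (auto simp: is_path_def less_Suc_eq)

lemma path3: "u \<in> verts G \<Longrightarrow> v \<in> verts G \<Longrightarrow> w \<in> verts G \<Longrightarrow> distinct [u,w,v]
  \<Longrightarrow> {u,w} \<in> edges G \<Longrightarrow> {w,v} \<in> edges G \<Longrightarrow> is_path G u v [u,w,v]"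
  by (auto simp: is_path_def less_Suc_eq)

lemma path4: "u \<in> verts G \<Longrightarrow> v \<in> verts G \<Longrightarrow> w \<in> verts G \<Longrightarrow> z \<in> verts G \<Longrightarrow> distinct [u,w,z,v]
  \<Longrightarrow> {u,w} \<in> edges G \<Longrightarrow> {w,z} \<in> edges G \<Longrightarrow> {z,v} \<in> edges G \<Longrightarrow> is_path G u v [u,w,z,v]"
  by (auto simp: is_path_def less_Suc_eq)

lemma len1: "is_path G u v p \<Longrightarrow> length p = 1 \<Longrightarrow> u = v"
  by (cases p) (auto simp: is_path_def)

lemma len2: assumes "is_path G u v p" "length p = 2" shows "u \<noteq> v \<and> {u,v} \<in> edges G"
proof -
  obtain a b where p: "p = [a,b]" using assms(2)
    by (metis One_nat_def Suc_1 length_0_conv length_Suc_conv)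
  show ?thesis using assms(1) unfolding p is_path_def by (auto dest: spec[of _ 0])
qed

lemma len3: assumes "is_path G u v p" "length p = 3"
  shows "\<exists>w\<in>verts G. {u,w} \<in> edges G \<and> {w,v} \<in> edges G"
proof -
  obtain a b d where p: "p = [a,b,d]" using assms(2)
    by (metis length_0_conv length_Suc_conv numeral_3_eq_3)
  show ?thesis using assms(1) unfolding p is_path_def
    apply (intro bexI[of _ b]) using spec[of _ 0] spec[of _ 1] by (auto dest: spec[of _ 0] spec[of _ 1])
qed

lemma gdist_le: "is_path G u v p \<Longrightarrow> gdist G u v \<le> length p - 1"
  unfolding gdist_def by (rule Least_le) (auto simp: is_path_def)

lemma gdist_ex: "is_path G u v p \<Longrightarrow> \<exists>q. is_path G u v q \<and> length q = Suc (gdist G u v)"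
  unfolding gdist_def by (rule LeastI_ex) (auto simp: is_path_def intro!: exI[of _ "length p - 1"])


definition reach :: "'a set \<Rightarrow> ('a \<Rightarrow> 'a \<Rightarrow> bool) \<Rightarrow> 'a \<Rightarrow> 'a \<Rightarrow> bool" where
  "reach V A u v \<longleftrightarrow> u = v \<or> A u v \<or> (\<exists>w\<in>V. A u w \<and> A w v) \<or> (\<exists>w1\<in>V. \<exists>w2\<in>V. A u w1 \<and> A w1 w2 \<and> A w2 v)"

lemma gdist_formula:
  assumes hE: "\<And>u v. u \<in> verts G \<Longrightarrow> v \<in> verts G \<Longrightarrow> {u,v} \<in> edges G \<longleftrightarrow> A u v"
    and irr: "\<And>u. \<not> A u u"
    and uv: "u \<in> verts G" "v \<in> verts G"
    and r: "reach (verts G) A u v"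
  shows "gdist G u v = (if u = v then 0 else if A u v then 1 else if (\<exists>w\<in>verts G. A u w \<and> A w v) then 2 else 3)"
proof -
  have ex: "\<exists>p. is_path G u v p \<and> length p \<le> 4"
  proof (cases "u = v")
    case True then show ?thesis using path1[OF uv(1)] by (intro exI[of _ "[u]"]) auto
  next
    case F1: False
    show ?thesis
    proof (cases "A u v")
      case True then show ?thesis using path2[OF uv F1] hE[OF uv] by (intro exI[of _ "[u,v]"]) auto
    next
      case F2: False
      show ?thesis
      proof (cases "\<exists>w\<in>verts G. A u w \<and> A w v")
        case True
        then obtain w where w: "w \<in> verts G" "A u w" "A w v" by blast
        have "w \<noteq> u" "w \<noteq> v" using w irr by auto
        then show ?thesis using path3[OF uv w(1)] F1 w hE[OF uv(1) w(1)] hE[OF w(1) uv(2)]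
          by (intro exI[of _ "[u,w,v]"]) auto
      next
        case F3: False
        then obtain w z where w: "w \<in> verts G" "z \<in> verts G" "A u w" "A w z" "A z v"
          using r F1 F2 unfolding reach_def by blast
        have "distinct [u,w,z,v]" using w irr F1 F2 F3 by auto
        then show ?thesis using path4[OF uv w(1,2)] w hE[OF uv(1) w(1)] hE[OF w(1) w(2)] hE[OF w(2) uv(2)]
          by (intro exI[of _ "[u,w,z,v]"]) auto
      qed
    qed
  qed
  then obtain p where p: "is_path G u v p" "length p \<le> 4" by blast
  have ub: "gdist G u v \<le> 3" using gdist_le[OF p(1)] p(2) by linarith
  obtain q where q: "is_path G u v q" "length q = Suc (gdist G u v)" using gdist_ex[OF p(1)] by blast
  have c0: "gdist G u v = 0 \<Longrightarrow> u = v" using len1[OF q(1)] q(2) by simp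
  have c1: "gdist G u v = 1 \<Longrightarrow> A u v" using len2[OF q(1)] q(2) hE[OF uv] by simp
  have c2: "gdist G u v = 2 \<Longrightarrow> \<exists>w\<in>verts G. A u w \<and> A w v" using len3[OF q(1)] q(2) hE uv by fastforce
  have l0: "u = v \<Longrightarrow> gdist G u v = 0" using gdist_le[OF path1[OF uv(1)]] by simp
  have l1: "u \<noteq> v \<Longrightarrow> A u v \<Longrightarrow> gdist G u v \<le> 1" using gdist_le[OF path2[OF uv]] hE[OF uv] by force
  have l2: "u \<noteq> v \<Longrightarrow> \<exists>w\<in>verts G. A u w \<and> A w v \<Longrightarrow> gdist G u v \<le> 2"
  proof -
    assume "u \<noteq> v" "\<exists>w\<in>verts G. A u w \<and> A w v"
    then obtain w where w: "w \<in> verts G" "A u w" "A w v" "u \<noteq> v" by blast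
    have "w \<noteq> u" "w \<noteq> v" using w irr by auto
    then show ?thesis using gdist_le[OF path3[OF uv w(1)]] w hE[OF uv(1) w(1)] hE[OF w(1) uv(2)] by force
  qed
  show ?thesis
  proof (cases "u = v")
    case True then show ?thesis using l0 by simp
  next
    case F1: False
    have g0: "gdist G u v \<noteq> 0" using c0 F1 by blast
    show ?thesis
    proof (cases "A u v")
      case True then show ?thesis using l1 F1 g0 by simp
    next
      case F2: False
      have g1: "gdist G u v \<noteq> 1" using c1 F2 by blast
      show ?thesis
      proof (cases "\<exists>w\<in>verts G. A u w \<and> A w v")
        case True then show ?thesis using l2 F1 F2 g0 g1 by simp
      next
        case F3: False
        have "gdist G u v \<noteq> 2" using c2 F3 by blast
        then show ?thesis using F1 F2 F3 g0 g1 ub by simp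
      qed
    qed
  qed
qed

lemma setdist_formula:
  assumes hE: "\<And>u v. u \<in> verts G \<Longrightarrow> v \<in> verts G \<Longrightarrow> {u,v} \<in> edges G \<longleftrightarrow> A u v"
    and irr: "\<And>u. \<not> A u u"
    and v: "v \<in> verts G" and R: "R \<subseteq> verts G"
    and r: "\<And>x. x \<in> verts G \<Longrightarrow> reach (verts G) A v x"
  shows "setdist G v R = (if v \<in> R then 0 else if (\<exists>x\<in>R. A v x) then 1
     else if (\<exists>x\<in>R. \<exists>w\<in>verts G. A v w \<and> A w x) then 2 else if R \<noteq> {} then 3 else \<infinity>)"
proof -
  have g: "\<And>x. x \<in> R \<Longrightarrow> gdist G v x = (if v = x then 0 else if A v x then 1 else if (\<exists>w\<in>verts G. A v w \<and> A w x) then 2 else 3)"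
    using gdist_formula[OF hE irr v] r R by blast
  have low: "\<And>a. (\<And>x. x \<in> R \<Longrightarrow> a \<le> enat (gdist G v x)) \<Longrightarrow> a \<le> setdist G v R"
    unfolding setdist_def by (rule INF_greatest)
  have up: "\<And>x. x \<in> R \<Longrightarrow> setdist G v R \<le> enat (gdist G v x)"
    unfolding setdist_def by (rule INF_lower)
  show ?thesis
  proof (cases "v \<in> R")
    case True then show ?thesis using up[OF True] g[OF True] by (simp add: zero_enat_def[symmetric])
  next
    case F1: False
    have ne: "\<And>x. x \<in> R \<Longrightarrow> v \<noteq> x" using F1 by blast
    show ?thesis
    proof (cases "\<exists>x\<in>R. A v x")
      case True
      then obtain x where x: "x \<in> R" "A v x" by blast
      have "setdist G v R \<le> 1" using up[OF x(1)] g[OF x(1)] x ne[OF x(1)] by (simp add: one_enat_def)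
      moreover have "1 \<le> setdist G v R"
        by (rule low) (use g ne in \<open>auto simp: one_enat_def\<close>)
      ultimately show ?thesis using F1 True by simp
    next
      case F2: False
      show ?thesis
      proof (cases "\<exists>x\<in>R. \<exists>w\<in>verts G. A v w \<and> A w x")
        case True
        then obtain x where x: "x \<in> R" "\<exists>w\<in>verts G. A v w \<and> A w x" by blast
        have "setdist G v R \<le> 2" using up[OF x(1)] g[OF x(1)] x ne[OF x(1)] F2
          by (simp add: numeral_eq_enat)
        moreover have "2 \<le> setdist G v R"
          by (rule low) (use g ne F2 in \<open>auto simp: numeral_eq_enat\<close>)
        ultimately show ?thesis using F1 F2 True by simp
      next
        case F3: False
        show ?thesis
        proof (cases "R = {}")
          case True then show ?thesis unfolding setdist_def by (simp add: top_enat_def)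
        next
          case False
          then obtain x where x: "x \<in> R" by blast
          have "\<not> (\<exists>w\<in>verts G. A v w \<and> A w x)" using F3 x by blast
          then have "gdist G v x = 3" using g[OF x(1)] x ne[OF x(1)] F2 by auto
          then have "setdist G v R \<le> 3" using up[OF x(1)] by (simp add: numeral_eq_enat)
          moreover have "3 \<le> setdist G v R"
            by (rule low) (use g ne F2 F3 in \<open>auto simp: numeral_eq_enat\<close>)
          ultimately show ?thesis using F1 F2 F3 False by simp
        qed
      qed
    qed
  qed
qed


type_synonym cv = "nat + nat set \<times> nat"

fun adjC :: "cv \<Rightarrow> cv \<Rightarrow> bool" where
  "adjC (Inl a) (Inl b) = (a \<noteq> b)"
| "adjC (Inl a) (Inr (e,y)) = (a \<in> e)"
| "adjC (Inr (e,y)) (Inl a) = (a \<in> e)"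
| "adjC (Inr (e,y)) (Inr (f,z)) = (e = f \<and> y \<noteq> z)"

lemma adjC_irr: "\<not> adjC u u"
  by (cases u) auto

lemma adjC_sym: "adjC u v = adjC v u"
  by (cases u; cases v) auto

abbreviation GC :: "nat \<Rightarrow> nat \<Rightarrow> cv graph" where
  "GC m n \<equiv> edge_corona (complete_graph m) (complete_graph n)"

abbreviation Em :: "nat \<Rightarrow> nat set set" where
  "Em m \<equiv> edges (complete_graph m)"

lemma Em_iff: "e \<in> Em m \<longleftrightarrow> (\<exists>i j. e = {i,j} \<and> i < m \<and> j < m \<and> i \<noteq> j)"
  by (auto simp: edges_def complete_graph_def)

lemma Em_sub: "e \<in> Em m \<Longrightarrow> x \<in> e \<Longrightarrow> x < m"
  by (auto simp: Em_iff)

lemma Em_ne: "e \<in> Em m \<Longrightarrow> \<exists>x. x \<in> e"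
  by (auto simp: Em_iff)

lemma Em_other: "e \<in> Em m \<Longrightarrow> x \<in> e \<Longrightarrow> \<exists>y\<in>e. y \<noteq> x"
  by (auto simp: Em_iff)

lemma Em_pair: "a < m \<Longrightarrow> b < m \<Longrightarrow> a \<noteq> b \<Longrightarrow> {a,b} \<in> Em m"
  by (auto simp: Em_iff)

lemma finite_Em: "finite (Em m)"
proof -
  have "Em m \<subseteq> Pow {0..<m}" by (auto simp: Em_iff)
  then show ?thesis by (rule finite_subset) simp
qed

lemma verts_complete: "verts (complete_graph n) = {0..<n}"
  by (simp add: verts_def complete_graph_def)

lemma inV_Inl[simp]: "Inl a \<in> verts (GC m n) \<longleftrightarrow> a < m"
  by (auto simp: edge_corona_def verts_def complete_graph_def)

lemma inV_Inr[simp]: "Inr (e,y) \<in> verts (GC m n) \<longleftrightarrow> e \<in> Em m \<and> y < n"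
  by (auto simp: edge_corona_def verts_def[of "(_, _)"] verts_complete)

lemma edgesC: "edges (GC m n) =
     (\<lambda>e. Inl ` e) ` Em m
     \<union> {(\<lambda>y. Inr (e, y)) ` f | e f. e \<in> Em m \<and> f \<in> Em n}
     \<union> {{Inl x, Inr (e, y)} | x e y. e \<in> Em m \<and> x \<in> e \<and> y < n}"
  unfolding edge_corona_def verts_complete by (simp only: edges_def snd_conv atLeastLessThan_iff) simp

lemma edge_LL: "a < m \<Longrightarrow> b < m \<Longrightarrow> {Inl a, Inl b} \<in> edges (GC m n) \<longleftrightarrow> a \<noteq> b"
proof
  assume "{Inl a, Inl b} \<in> edges (GC m n)"
  then show "a \<noteq> b" unfolding edgesC
  proof (elim UnE)
    assume "({Inl a, Inl b} :: cv set) \<in> (\<lambda>e. Inl ` e) ` Em m"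
    then obtain e where "e \<in> Em m" "{Inl a, Inl b} = (Inl ` e :: cv set)" by blast
    then have "Inl ` {a,b} = (Inl ` e :: cv set)" by (simp only: image_insert image_empty)
    then have ab: "{a,b} = e" by (rule inj_image_eq_iff[OF inj_Inl, THEN iffD1])
    from \<open>e \<in> Em m\<close> obtain i j where "e = {i,j}" "i \<noteq> j" by (auto simp: Em_iff)
    show ?thesis
    proof
      assume "a = b"
      then have "{i,j} = {a}" using ab \<open>e = {i,j}\<close> by simp
      then show False using \<open>i \<noteq> j\<close> by (simp add: doubleton_eq_iff)
    qed
  next
    assume "({Inl a, Inl b} :: cv set) \<in> {(\<lambda>y. Inr (e, y)) ` f | e f. e \<in> Em m \<and> f \<in> Em n}"
    then obtain e' f where "{Inl a, Inl b} = ((\<lambda>y. Inr (e', y)) ` f :: cv set)" by blast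
    then have "Inl a \<in> (\<lambda>y. Inr (e', y)) ` f" by blast
    then show ?thesis by blast
  next
    assume "({Inl a, Inl b} :: cv set) \<in> {{Inl x, Inr (e, y)} | x e y. e \<in> Em m \<and> x \<in> e \<and> y < n}"
    then obtain x e y where "{Inl a, Inl b} = {Inl x, Inr (e, y) :: cv}" by blast
    then have "Inr (e, y) \<in> {Inl a, Inl b :: cv}" by blast
    then show ?thesis by blast
  qed
next
  assume "a < m" "b < m" "a \<noteq> b"
  then have "{a,b} \<in> Em m" by (rule Em_pair)
  then have "(Inl ` {a,b} :: cv set) \<in> (\<lambda>e. Inl ` e) ` Em m" by blast
  then show "{Inl a, Inl b} \<in> edges (GC m n)" unfolding edgesC by simp
qed

lemma edge_LR: "a < m \<Longrightarrow> e \<in> Em m \<Longrightarrow> y < n \<Longrightarrow> {Inl a, Inr (e,y)} \<in> edges (GC m n) \<longleftrightarrow> a \<in> e"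
proof
  assume "{Inl a, Inr (e,y)} \<in> edges (GC m n)"
  then show "a \<in> e" unfolding edgesC
  proof (elim UnE)
    assume "({Inl a, Inr (e,y)} :: cv set) \<in> (\<lambda>e. Inl ` e) ` Em m"
    then obtain e' where eq: "{Inl a, Inr (e,y)} = (Inl ` e' :: cv set)" by blast
    have "Inr (e,y) \<in> (Inl ` e' :: cv set)" by (simp only: eq[symmetric]) simp
    then show ?thesis by auto
  next
    assume "({Inl a, Inr (e,y)} :: cv set) \<in> {(\<lambda>y. Inr (e, y)) ` f | e f. e \<in> Em m \<and> f \<in> Em n}"
    then obtain e' f where eq: "{Inl a, Inr (e,y)} = ((\<lambda>y. Inr (e', y)) ` f :: cv set)" by blast
    have "Inl a \<in> ((\<lambda>y. Inr (e', y)) ` f :: cv set)" by (simp only: eq[symmetric]) simp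
    then show ?thesis by auto
  next
    assume "({Inl a, Inr (e,y)} :: cv set) \<in> {{Inl x, Inr (e, y)} | x e y. e \<in> Em m \<and> x \<in> e \<and> y < n}"
    then obtain x e' y' where eq: "{Inl a, Inr (e,y)} = {Inl x, Inr (e', y') :: cv}" and h: "x \<in> e'" by blast
    from eq have "a = x \<and> e = e'" by (simp add: doubleton_eq_iff)
    then show ?thesis using h by simp
  qed
next
  assume "a < m" "e \<in> Em m" "y < n" "a \<in> e"
  then have "{Inl a, Inr (e,y) :: cv} \<in> {{Inl x, Inr (e, y)} | x e y. e \<in> Em m \<and> x \<in> e \<and> y < n}"
    by (intro CollectI exI conjI) (rule refl | assumption)+
  then show "{Inl a, Inr (e,y)} \<in> edges (GC m n)" unfolding edgesC by (intro UnI2)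
qed

lemma mem_img_Inr: "X \<in> {(\<lambda>y. Inr (e, y)) ` f | e f. e \<in> Em m \<and> f \<in> Em n} \<longleftrightarrow>
  (\<exists>e\<in>Em m. \<exists>f\<in>Em n. X = ((\<lambda>y. Inr (e, y)) ` f :: cv set))"
  by blast

lemma edge_RR: "e \<in> Em m \<Longrightarrow> y < n \<Longrightarrow> f \<in> Em m \<Longrightarrow> z < n \<Longrightarrow>
   {Inr (e,y), Inr (f,z)} \<in> edges (GC m n) \<longleftrightarrow> (e = f \<and> y \<noteq> z)"
proof
  assume "{Inr (e,y), Inr (f,z)} \<in> edges (GC m n)"
  then show "e = f \<and> y \<noteq> z" unfolding edgesC
  proof (elim UnE)
    assume "({Inr (e,y), Inr (f,z)} :: cv set) \<in> (\<lambda>e. Inl ` e) ` Em m"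
    then obtain e' where eq: "{Inr (e,y), Inr (f,z)} = (Inl ` e' :: cv set)" by blast
    have "Inr (e,y) \<in> (Inl ` e' :: cv set)" by (simp only: eq[symmetric]) simp
    then show ?thesis by auto
  next
    assume "({Inr (e,y), Inr (f,z)} :: cv set) \<in> {(\<lambda>y. Inr (e, y)) ` f | e f. e \<in> Em m \<and> f \<in> Em n}"
    then have "\<exists>e'\<in>Em m. \<exists>g\<in>Em n. {Inr (e,y), Inr (f,z)} = ((\<lambda>y. Inr (e', y)) ` g :: cv set)"
      by (rule mem_img_Inr[THEN iffD1])
    then obtain e' where "\<exists>g\<in>Em n. {Inr (e,y), Inr (f,z)} = ((\<lambda>y. Inr (e', y)) ` g :: cv set)"
      by (rule bexE)
    then obtain g where g1: "g \<in> Em n" and g2: "{Inr (e,y), Inr (f,z)} = ((\<lambda>y. Inr (e', y)) ` g :: cv set)"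
      by (rule bexE)
    from g1 obtain i j where ij: "g = {i,j}" "i \<noteq> j" by (auto simp: Em_iff)
    have "{Inr (e,y), Inr (f,z)} = {Inr (e',i), Inr (e',j) :: cv}" unfolding g2 ij(1) by simp
    then have "(e = e' \<and> y = i \<and> f = e' \<and> z = j) \<or> (e = e' \<and> y = j \<and> f = e' \<and> z = i)"
      by (simp add: doubleton_eq_iff)
    then show ?thesis using ij(2) by blast
  next
    assume "({Inr (e,y), Inr (f,z)} :: cv set) \<in> {{Inl x, Inr (e, y)} | x e y. e \<in> Em m \<and> x \<in> e \<and> y < n}"
    then obtain x e' y' where eq: "{Inr (e,y), Inr (f,z)} = {Inl x, Inr (e', y') :: cv}" by blast
    have "Inl x \<in> {Inr (e,y), Inr (f,z) :: cv}" by (simp only: eq) simp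
    then show ?thesis by simp
  qed
next
  assume a: "e \<in> Em m" "y < n" "f \<in> Em m" "z < n" "e = f \<and> y \<noteq> z"
  then have yz: "{y,z} \<in> Em n" by (intro Em_pair) auto
  have "((\<lambda>y'. Inr (e, y')) ` {y,z} :: cv set) \<in> {(\<lambda>y. Inr (e, y)) ` f | e f. e \<in> Em m \<and> f \<in> Em n}"
    using a(1) yz by (intro CollectI exI conjI) (rule refl | assumption)+
  then show "{Inr (e,y), Inr (f,z)} \<in> edges (GC m n)" unfolding edgesC using a(5) by simp
qed

lemma edge_iff: "u \<in> verts (GC m n) \<Longrightarrow> v \<in> verts (GC m n) \<Longrightarrow> {u,v} \<in> edges (GC m n) \<longleftrightarrow> adjC u v"
proof (cases u; cases v)
  fix a b assume "u = Inl a" "v = Inl b" "u \<in> verts (GC m n)" "v \<in> verts (GC m n)"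
  then show ?thesis using edge_LL by simp
next
  fix a p assume "u = Inl a" "v = Inr p" "u \<in> verts (GC m n)" "v \<in> verts (GC m n)"
  then show ?thesis using edge_LR by (cases p) simp
next
  fix a p assume "u = Inr p" "v = Inl a" "u \<in> verts (GC m n)" "v \<in> verts (GC m n)"
  then show ?thesis using edge_LR by (cases p) (simp add: insert_commute)
next
  fix p q assume "u = Inr p" "v = Inr q" "u \<in> verts (GC m n)" "v \<in> verts (GC m n)"
  then show ?thesis using edge_RR by (cases p; cases q) simp
qed

lemma reachC: assumes "u \<in> verts (GC m n)" "v \<in> verts (GC m n)"
  shows "u = v \<or> adjC u v \<or> (\<exists>w\<in>verts (GC m n). adjC u w \<and> adjC w v) \<or>
     (\<exists>a b. a < m \<and> b < m \<and> a \<noteq> b \<and> adjC u (Inl a) \<and> adjC (Inl b) v)"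
proof (cases u; cases v)
  fix a b assume "u = Inl a" "v = Inl b"
  then have "u = v \<or> adjC u v" by auto
  then show ?thesis by blast
next
  fix a p assume uv: "u = Inl a" "v = Inr p"
  obtain e y where p: "p = (e,y)" by (cases p)
  have e: "e \<in> Em m" using assms uv p by simp
  then obtain b where b: "b \<in> e" using Em_ne by blast
  show ?thesis
  proof (cases "a \<in> e")
    case True then have "adjC u v" using uv p by simp
    then show ?thesis by blast
  next
    case False
    then have "adjC u (Inl b) \<and> adjC (Inl b) v" using uv p b by auto
    moreover have "Inl b \<in> verts (GC m n)" using Em_sub[OF e b] by simp
    ultimately show ?thesis by blast
  qed
next
  fix a p assume uv: "u = Inr p" "v = Inl a"
  obtain e y where p: "p = (e,y)" by (cases p)
  have e: "e \<in> Em m" using assms uv p by simp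
  then obtain b where b: "b \<in> e" using Em_ne by blast
  show ?thesis
  proof (cases "a \<in> e")
    case True then have "adjC u v" using uv p by simp
    then show ?thesis by blast
  next
    case False
    then have "adjC u (Inl b) \<and> adjC (Inl b) v" using uv p b by auto
    moreover have "Inl b \<in> verts (GC m n)" using Em_sub[OF e b] by simp
    ultimately show ?thesis by blast
  qed
next
  fix p q assume uv: "u = Inr p" "v = Inr q"
  obtain e y where p: "p = (e,y)" by (cases p)
  obtain f z where q: "q = (f,z)" by (cases q)
  have e: "e \<in> Em m" and f: "f \<in> Em m" using assms uv p q by auto
  show ?thesis
  proof (cases "e = f")
    case True then have "u = v \<or> adjC u v" using uv p q by auto
    then show ?thesis by blast
  next
    case False
    show ?thesis
    proof (cases "\<exists>a. a \<in> e \<and> a \<in> f")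
      case True
      then obtain a where a: "a \<in> e" "a \<in> f" by blast
      have "Inl a \<in> verts (GC m n)" using Em_sub[OF e a(1)] by simp
      moreover have "adjC u (Inl a) \<and> adjC (Inl a) v" using a uv p q by simp
      ultimately show ?thesis by blast
    next
      case F: False
      obtain a where a: "a \<in> e" using Em_ne e by blast
      obtain b where b: "b \<in> f" using Em_ne f by blast
      have "a \<noteq> b" using a b F by blast
      moreover have "adjC u (Inl a) \<and> adjC (Inl b) v" using a b uv p q by simp
      moreover have "a < m" "b < m" using Em_sub[OF e a] Em_sub[OF f b] by auto
      ultimately show ?thesis by blast
    qed
  qed
qed

lemma reachC': "u \<in> verts (GC m n) \<Longrightarrow> v \<in> verts (GC m n) \<Longrightarrow> reach (verts (GC m n)) adjC u v"
  using reachC[of u m n v] unfolding reach_def by fastforce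

lemma setdistC:
  assumes "v \<in> verts (GC m n)" "R \<subseteq> verts (GC m n)"
  shows "setdist (GC m n) v R = (if v \<in> R then 0 else if (\<exists>x\<in>R. adjC v x) then 1
     else if (\<exists>x\<in>R. \<exists>w\<in>verts (GC m n). adjC v w \<and> adjC w x) then 2 else if R \<noteq> {} then 3 else \<infinity>)"
  by (rule setdist_formula[OF edge_iff adjC_irr assms reachC'[OF assms(1)]])


lemma code_eq_iff:
  "rainbow_code G k c u = rainbow_code G k c v \<longleftrightarrow>
   (\<forall>i\<in>{1..k}. setdist G u (color_class G c i) = setdist G v (color_class G c i))"
proof -
  have "set [1..<Suc k] = {1..k}" by auto
  then show ?thesis unfolding rainbow_code_def map_eq_conv by simp
qed

lemma cls_sub: "color_class G c i \<subseteq> verts G"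
  by (auto simp: color_class_def)

lemma sdC: "v \<in> verts (GC m n) \<Longrightarrow>
  setdist (GC m n) v (color_class (GC m n) c i) =
   (if c v = i then 0 else if (\<exists>x\<in>verts (GC m n). adjC v x \<and> c x = i) then 1
     else if (\<exists>x\<in>verts (GC m n). c x = i \<and> (\<exists>w\<in>verts (GC m n). adjC v w \<and> adjC w x)) then 2
     else if (\<exists>x\<in>verts (GC m n). c x = i) then 3 else \<infinity>)"
proof -
  assume v: "v \<in> verts (GC m n)"
  let ?R = "color_class (GC m n) c i"
  have 1: "(v \<in> ?R) = (c v = i)" using v by (simp add: color_class_def)
  have 2: "(\<exists>x\<in>?R. adjC v x) = (\<exists>x\<in>verts (GC m n). adjC v x \<and> c x = i)"
    unfolding color_class_def by blast
  have 3: "(\<exists>x\<in>?R. \<exists>w\<in>verts (GC m n). adjC v w \<and> adjC w x) =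
    (\<exists>x\<in>verts (GC m n). c x = i \<and> (\<exists>w\<in>verts (GC m n). adjC v w \<and> adjC w x))"
    unfolding color_class_def by blast
  have 4: "(?R \<noteq> {}) = (\<exists>x\<in>verts (GC m n). c x = i)"
    unfolding color_class_def by blast
  show ?thesis by (subst setdistC[OF v cls_sub]) (simp only: 1 2 3 4)
qed

lemma sd0_iff: "v \<in> verts (GC m n) \<Longrightarrow> setdist (GC m n) v (color_class (GC m n) c i) = 0 \<longleftrightarrow> c v = i"
  by (simp add: sdC numeral_eq_enat one_enat_def zero_enat_def)

lemma sd_le1_iff: "v \<in> verts (GC m n) \<Longrightarrow> setdist (GC m n) v (color_class (GC m n) c i) \<le> 1 \<longleftrightarrow>
   (\<exists>x\<in>verts (GC m n). (x = v \<or> adjC v x) \<and> c x = i)"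
  by (auto simp add: sdC numeral_eq_enat one_enat_def zero_enat_def)

lemma sd1: "v \<in> verts (GC m n) \<Longrightarrow> c v \<noteq> i \<Longrightarrow> x \<in> verts (GC m n) \<Longrightarrow> adjC v x \<Longrightarrow> c x = i \<Longrightarrow>
   setdist (GC m n) v (color_class (GC m n) c i) = 1"
  by (subst sdC) auto

lemma rainbow_paths:
  assumes inj: "\<And>a b. a < m \<Longrightarrow> b < m \<Longrightarrow> a \<noteq> b \<Longrightarrow> c (Inl a) \<noteq> c (Inl b)"
    and uv: "u \<in> verts (GC m n)" "v \<in> verts (GC m n)"
  shows "\<exists>p. is_path (GC m n) u v p \<and> distinct (map c (butlast (tl p)))"
proof (cases "u = v")
  case True then show ?thesis using path1[OF uv(1)] by (intro exI[of _ "[u]"]) auto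
next
  case F1: False
  show ?thesis
  proof (cases "adjC u v")
    case True then show ?thesis using path2[OF uv F1] edge_iff[OF uv] by (intro exI[of _ "[u,v]"]) auto
  next
    case F2: False
    show ?thesis
    proof (cases "\<exists>w\<in>verts (GC m n). adjC u w \<and> adjC w v")
      case True
      then obtain w where w: "w \<in> verts (GC m n)" "adjC u w" "adjC w v" by blast
      have "w \<noteq> u" "w \<noteq> v" using w adjC_irr by auto
      then show ?thesis using path3[OF uv w(1)] F1 w edge_iff[OF uv(1) w(1)] edge_iff[OF w(1) uv(2)]
        by (intro exI[of _ "[u,w,v]"]) auto
    next
      case F3: False
      then obtain a b where ab: "a < m" "b < m" "a \<noteq> b" "adjC u (Inl a)" "adjC (Inl b) v"
        using reachC[OF uv] F1 F2 by blast
      have wv: "Inl a \<in> verts (GC m n)" "Inl b \<in> verts (GC m n)" using ab by auto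
      have "u \<noteq> Inl a" "Inl b \<noteq> v" using ab adjC_irr by auto
      moreover have "u \<noteq> Inl b" using F2 ab by auto
      moreover have "Inl a \<noteq> v" using F2 ab by auto
      ultimately have d: "distinct [u, Inl a, Inl b, v]" using F1 ab by auto
      have "adjC (Inl a) (Inl b)" using ab by simp
      then have "is_path (GC m n) u v [u, Inl a, Inl b, v]"
        using path4[OF uv wv d] ab edge_iff[OF uv(1) wv(1)] edge_iff[OF wv(1) wv(2)] edge_iff[OF wv(2) uv(2)]
        by auto
      then show ?thesis using inj[OF ab(1-3)] by (intro exI[of _ "[u, Inl a, Inl b, v]"]) auto
    qed
  qed
qed


definition colC :: "(nat \<Rightarrow> nat) \<Rightarrow> (nat set \<Rightarrow> nat set) \<Rightarrow> nat \<Rightarrow> cv \<Rightarrow> nat" where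
  "colC \<kappa> P k v = (case v of Inl x \<Rightarrow> \<kappa> x | Inr (e,y) \<Rightarrow> sorted_list_of_set ({1..k} - P e) ! y)"

lemma colC_Inl[simp]: "colC \<kappa> P k (Inl x) = \<kappa> x" by (simp add: colC_def)
lemma colC_Inr[simp]: "colC \<kappa> P k (Inr (e,y)) = sorted_list_of_set ({1..k} - P e) ! y" by (simp add: colC_def)

lemma construction:
  fixes m n k :: nat and \<kappa> :: "nat \<Rightarrow> nat" and P :: "nat set \<Rightarrow> nat set"
  assumes kinj: "inj_on \<kappa> {0..<m}" and kran: "\<And>x. x < m \<Longrightarrow> \<kappa> x \<in> {1..k}"
    and Psub: "\<And>e. e \<in> Em m \<Longrightarrow> P e \<subseteq> {1..k}"
    and Pcard: "\<And>e. e \<in> Em m \<Longrightarrow> card ({1..k} - P e) = n"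
    and Mne: "\<And>e. e \<in> Em m \<Longrightarrow> P e - \<kappa> ` e \<noteq> {}"
    and Minj: "inj_on (\<lambda>e. P e - \<kappa> ` e) (Em m)"
    and cover: "\<And>x l. x < m \<Longrightarrow> l \<in> {1..k} \<Longrightarrow> l \<in> \<kappa> ` {0..<m} \<or> (\<exists>e\<in>Em m. x \<in> e \<and> l \<notin> P e)"
  shows "locating_rainbow_coloring (GC m n) k (colC \<kappa> P k)"
proof -
  define c where "c = colC \<kappa> P k"
  define Ls where "Ls e = sorted_list_of_set ({1..k} - P e)" for e
  have cInr: "c (Inr (e,y)) = Ls e ! y" for e y by (simp add: c_def Ls_def)
  have cInl: "c (Inl x) = \<kappa> x" for x by (simp add: c_def)
  have Lset: "set (Ls e) = {1..k} - P e" for e by (simp add: Ls_def)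
  have Ldist: "distinct (Ls e)" for e by (simp add: Ls_def)
  have Llen: "e \<in> Em m \<Longrightarrow> length (Ls e) = n" for e using Pcard by (simp add: Ls_def)
  have Lmem: "e \<in> Em m \<Longrightarrow> y < n \<Longrightarrow> Ls e ! y \<in> {1..k} - P e" for e y
    using nth_mem[of y "Ls e"] Llen Lset by simp
  have Lsurj: "e \<in> Em m \<Longrightarrow> l \<in> {1..k} - P e \<Longrightarrow> \<exists>z<n. Ls e ! z = l" for e l
    using Lset[of e] Llen[of e] by (metis in_set_conv_nth)
  have range: "\<forall>v\<in>verts (GC m n). c v \<in> {1..k}"
  proof
    fix v assume v: "v \<in> verts (GC m n)"
    show "c v \<in> {1..k}"
    proof (cases v)
      case (Inl x) then show ?thesis using v kran cInl by simp
    next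
      case (Inr p)
      obtain e y where p: "p = (e,y)" by (cases p)
      then show ?thesis using v Inr Lmem cInr by simp
    qed
  qed
  have rb: "\<forall>u\<in>verts (GC m n). \<forall>v\<in>verts (GC m n). \<exists>p. is_path (GC m n) u v p \<and> distinct (map c (butlast (tl p)))"
  proof (intro ballI)
    fix u v assume uv: "u \<in> verts (GC m n)" "v \<in> verts (GC m n)"
    have "\<And>a b. a < m \<Longrightarrow> b < m \<Longrightarrow> a \<noteq> b \<Longrightarrow> c (Inl a) \<noteq> c (Inl b)"
      using kinj cInl by (auto simp: inj_on_def)
    then show "\<exists>p. is_path (GC m n) u v p \<and> distinct (map c (butlast (tl p)))"
      by (rule rainbow_paths[OF _ uv])
  qed
  have nL: "\<exists>w\<in>verts (GC m n). (w = Inl x \<or> adjC (Inl x) w) \<and> c w = l"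
    if x: "x < m" and l: "l \<in> {1..k}" for x l
  proof (cases "l \<in> \<kappa> ` {0..<m}")
    case True
    then obtain a where a: "a < m" "l = \<kappa> a" by auto
    have "Inl a = Inl x \<or> adjC (Inl x) (Inl a)" by auto
    moreover have "Inl a \<in> verts (GC m n)" "c (Inl a) = l" using a cInl by auto
    ultimately show ?thesis by (intro bexI[of _ "Inl a"] conjI)
  next
    case False
    then obtain e where e: "e \<in> Em m" "x \<in> e" "l \<notin> P e" using cover[OF x l] by blast
    then obtain z where z: "z < n" "Ls e ! z = l" using Lsurj l by blast
    have "Inr (e,z) \<in> verts (GC m n)" "adjC (Inl x) (Inr (e,z))" "c (Inr (e,z)) = l"
      using e z cInr by auto
    then show ?thesis by (intro bexI[of _ "Inr (e,z)"] conjI disjI2)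
  qed
  have nR: "(\<exists>w\<in>verts (GC m n). (w = Inr (e,y) \<or> adjC (Inr (e,y)) w) \<and> c w = l) \<longleftrightarrow> l \<notin> P e - \<kappa> ` e"
    if e: "e \<in> Em m" and y: "y < n" and l: "l \<in> {1..k}" for e y l
  proof
    assume "\<exists>w\<in>verts (GC m n). (w = Inr (e,y) \<or> adjC (Inr (e,y)) w) \<and> c w = l"
    then obtain w where w1: "w \<in> verts (GC m n)" and w23: "(w = Inr (e,y) \<or> adjC (Inr (e,y)) w) \<and> c w = l"
      by (rule bexE)
    have w: "w \<in> verts (GC m n)" "w = Inr (e,y) \<or> adjC (Inr (e,y)) w" "c w = l" using w1 w23 by auto
    show "l \<notin> P e - \<kappa> ` e"
    proof (cases w)
      case (Inl a)
      then have "a \<in> e" using w(2) by auto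
      then show ?thesis using w(3) Inl cInl by auto
    next
      case (Inr q)
      obtain f z where q: "q = (f,z)" by (cases q)
      have "f = e" using w(2) Inr q by auto
      then have "l \<in> {1..k} - P e" using Lmem[OF e] w(1,3) Inr q cInr by auto
      then show ?thesis by blast
    qed
  next
    assume nl: "l \<notin> P e - \<kappa> ` e"
    show "\<exists>w\<in>verts (GC m n). (w = Inr (e,y) \<or> adjC (Inr (e,y)) w) \<and> c w = l"
    proof (cases "l \<in> \<kappa> ` e")
      case True
      then obtain a where a: "a \<in> e" "l = \<kappa> a" by auto
      have "Inl a \<in> verts (GC m n)" "adjC (Inr (e,y)) (Inl a)" "c (Inl a) = l"
        using a Em_sub[OF e a(1)] cInl by auto
      then show ?thesis by (intro bexI[of _ "Inl a"] conjI disjI2)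
    next
      case False
      then have "l \<in> {1..k} - P e" using nl l by blast
      then obtain z where z: "z < n" "Ls e ! z = l" using Lsurj[OF e] by blast
      have "Inr (e,z) \<in> verts (GC m n)" "Inr (e,z) = Inr (e,y) \<or> adjC (Inr (e,y)) (Inr (e,z))" "c (Inr (e,z)) = l"
        using e z cInr by auto
      then show ?thesis by (intro bexI[of _ "Inr (e,z)"] conjI)
    qed
  qed
  have loc: "inj_on (rainbow_code (GC m n) k c) (verts (GC m n))"
  proof (rule inj_onI)
    fix u v assume u: "u \<in> verts (GC m n)" and v: "v \<in> verts (GC m n)"
      and eqc: "rainbow_code (GC m n) k c u = rainbow_code (GC m n) k c v"
    have eq: "\<And>i. i \<in> {1..k} \<Longrightarrow> setdist (GC m n) u (color_class (GC m n) c i) = setdist (GC m n) v (color_class (GC m n) c i)"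
      using eqc unfolding code_eq_iff by blast
    have cu: "c u \<in> {1..k}" using range u by blast
    have "setdist (GC m n) u (color_class (GC m n) c (c u)) = 0" using sd0_iff[OF u] by blast
    then have "setdist (GC m n) v (color_class (GC m n) c (c u)) = 0" using eq[OF cu] by simp
    then have col: "c v = c u" using sd0_iff[OF v] by blast
    have N: "\<And>i. i \<in> {1..k} \<Longrightarrow> (\<exists>w\<in>verts (GC m n). (w = u \<or> adjC u w) \<and> c w = i) \<longleftrightarrow> (\<exists>w\<in>verts (GC m n). (w = v \<or> adjC v w) \<and> c w = i)"
    proof -
      fix i assume i: "i \<in> {1..k}"
      have "(\<exists>w\<in>verts (GC m n). (w = u \<or> adjC u w) \<and> c w = i) \<longleftrightarrow> setdist (GC m n) u (color_class (GC m n) c i) \<le> 1"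
        using sd_le1_iff[OF u] by blast
      also have "\<dots> \<longleftrightarrow> setdist (GC m n) v (color_class (GC m n) c i) \<le> 1" using eq[OF i] by simp
      also have "\<dots> \<longleftrightarrow> (\<exists>w\<in>verts (GC m n). (w = v \<or> adjC v w) \<and> c w = i)"
        using sd_le1_iff[OF v] by blast
      finally show "?thesis i" .
    qed
    have N': "(\<exists>w\<in>verts (GC m n). (w = v \<or> adjC v w) \<and> c w = i) \<longleftrightarrow> (\<exists>w\<in>verts (GC m n). (w = u \<or> adjC u w) \<and> c w = i)"
      if "i \<in> {1..k}" for i using N[OF that] by (rule sym)
    have LR: False if "u' = Inl x" "v' = Inr (e,y)" "u' \<in> verts (GC m n)" "v' \<in> verts (GC m n)"
      and "\<And>i. i \<in> {1..k} \<Longrightarrow> (\<exists>w\<in>verts (GC m n). (w = u' \<or> adjC u' w) \<and> c w = i) \<longleftrightarrow> (\<exists>w\<in>verts (GC m n). (w = v' \<or> adjC v' w) \<and> c w = i)"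
      for u' v' x e y
    proof -
      have x: "x < m" and e: "e \<in> Em m" and y: "y < n" using that by auto
      obtain l where l: "l \<in> P e - \<kappa> ` e" using Mne[OF e] by blast
      have lk: "l \<in> {1..k}" using l Psub[OF e] by blast
      have "\<exists>w\<in>verts (GC m n). (w = u' \<or> adjC u' w) \<and> c w = l" using nL[OF x lk] that(1) by simp
      then have "\<exists>w\<in>verts (GC m n). (w = v' \<or> adjC v' w) \<and> c w = l" by (rule iffD1[OF that(5)[OF lk]])
      then have "l \<notin> P e - \<kappa> ` e" using nR[OF e y lk] that(2) by simp
      then show False using l by blast
    qed
    show "u = v"
    proof (cases u; cases v)
      fix a b assume "u = Inl a" "v = Inl b"
      then show ?thesis using col kinj u v cInl by (auto simp: inj_on_def)
    next
      fix a q assume uv: "u = Inl a" "v = Inr q"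
      obtain e y where "q = (e,y)" by (cases q)
      then show ?thesis using LR[OF uv(1) _ u v N] uv by simp
    next
      fix a q assume uv: "u = Inr q" "v = Inl a"
      obtain e y where "q = (e,y)" by (cases q)
      then show ?thesis using LR[OF uv(2) _ v u N'] uv by simp
    next
      fix p q assume uv: "u = Inr p" "v = Inr q"
      obtain e y where p: "p = (e,y)" by (cases p)
      obtain f z where q: "q = (f,z)" by (cases q)
      have e: "e \<in> Em m" "y < n" and f: "f \<in> Em m" "z < n" using u v uv p q by auto
      have "P e - \<kappa> ` e = P f - \<kappa> ` f"
      proof -
        have uE: "u = Inr (e,y)" and vE: "v = Inr (f,z)" using uv p q by auto
        have "\<forall>i\<in>{1..k}. i \<in> P e - \<kappa> ` e \<longleftrightarrow> i \<in> P f - \<kappa> ` f"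
        proof
          fix i assume i: "i \<in> {1..k}"
          have A: "(\<exists>w\<in>verts (GC m n). (w = Inr (e,y) \<or> adjC (Inr (e,y)) w) \<and> c w = i) \<longleftrightarrow> (\<exists>w\<in>verts (GC m n). (w = Inr (f,z) \<or> adjC (Inr (f,z)) w) \<and> c w = i)"
            using N[OF i] unfolding uE vE .
          show "i \<in> P e - \<kappa> ` e \<longleftrightarrow> i \<in> P f - \<kappa> ` f"
            using A nR[OF e i] nR[OF f i] by argo
        qed
        moreover have "P e - \<kappa> ` e \<subseteq> {1..k}" "P f - \<kappa> ` f \<subseteq> {1..k}" using Psub e f by auto
        ultimately show ?thesis by blast
      qed
      then have ef: "e = f" using Minj e f by (auto simp: inj_on_def)
      have "Ls e ! y = Ls e ! z" using col uv p q ef cInr by simp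
      then have "y = z" using nth_eq_iff_index_eq[OF Ldist] Llen[OF e(1)] e f by blast
      then show ?thesis using uv p q ef by simp
    qed
  qed
  show ?thesis unfolding locating_rainbow_coloring_def rainbow_vertex_coloring_def
    using range rb loc c_def by blast
qed


definition NcC :: "nat \<Rightarrow> nat \<Rightarrow> cv \<Rightarrow> cv set" where
  "NcC m n v = {x \<in> verts (GC m n). x = v \<or> adjC v x}"

lemma sdN: assumes v: "v \<in> verts (GC m n)"
  shows "setdist (GC m n) v (color_class (GC m n) c i) =
   (if c v = i then 0 else if (\<exists>x\<in>NcC m n v. c x = i) then 1
     else if (\<exists>w\<in>NcC m n v. \<exists>x\<in>NcC m n w. c x = i) then 2
     else if (\<exists>x\<in>verts (GC m n). c x = i) then 3 else \<infinity>)"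
proof -
  have 1: "c v \<noteq> i \<Longrightarrow> (\<exists>x\<in>verts (GC m n). adjC v x \<and> c x = i) = (\<exists>x\<in>NcC m n v. c x = i)"
    unfolding NcC_def by blast
  have 2: "c v \<noteq> i \<Longrightarrow> \<not> (\<exists>x\<in>NcC m n v. c x = i) \<Longrightarrow>
     (\<exists>x\<in>verts (GC m n). c x = i \<and> (\<exists>w\<in>verts (GC m n). adjC v w \<and> adjC w x)) = (\<exists>w\<in>NcC m n v. \<exists>x\<in>NcC m n w. c x = i)"
  proof
    assume "\<exists>x\<in>verts (GC m n). c x = i \<and> (\<exists>w\<in>verts (GC m n). adjC v w \<and> adjC w x)"
    then obtain x w where "x \<in> verts (GC m n)" "c x = i" "w \<in> verts (GC m n)" "adjC v w" "adjC w x" by blast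
    then have "w \<in> NcC m n v" "x \<in> NcC m n w" unfolding NcC_def by auto
    then show "\<exists>w\<in>NcC m n v. \<exists>x\<in>NcC m n w. c x = i" using \<open>c x = i\<close> by blast
  next
    assume a: "c v \<noteq> i" "\<not> (\<exists>x\<in>NcC m n v. c x = i)"
    assume "\<exists>w\<in>NcC m n v. \<exists>x\<in>NcC m n w. c x = i"
    then obtain w x where w: "w \<in> NcC m n v" "x \<in> NcC m n w" "c x = i" by blast
    have "w \<noteq> v" using w a by blast
    then have wv: "adjC v w" "w \<in> verts (GC m n)" using w(1) unfolding NcC_def by auto
    have "x \<noteq> w" using w a wv unfolding NcC_def by auto
    then have "adjC w x" "x \<in> verts (GC m n)" using w(2) unfolding NcC_def by auto
    then show "\<exists>x\<in>verts (GC m n). c x = i \<and> (\<exists>w\<in>verts (GC m n). adjC v w \<and> adjC w x)"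
      using wv w(3) by blast
  qed
  show ?thesis
  proof (cases "c v = i")
    case True then show ?thesis by (simp add: sdC[OF v])
  next
    case F1: False
    show ?thesis
    proof (cases "\<exists>x\<in>NcC m n v. c x = i")
      case True
      have A: "\<exists>x\<in>verts (GC m n). adjC v x \<and> c x = i" using 1[OF F1] True by argo
      show ?thesis by (subst sdC[OF v]) (simp only: F1 True A if_False if_True)
    next
      case F2: False
      have A: "\<not> (\<exists>x\<in>verts (GC m n). adjC v x \<and> c x = i)" using 1[OF F1] F2 by argo
      show ?thesis by (subst sdC[OF v]) (simp only: F1 F2 A 2[OF F1 F2] if_False if_True)
    qed
  qed
qed

lemma NcC_Inr: "NcC m n (Inr (e,y)) = {x \<in> verts (GC m n). (\<exists>a\<in>e. x = Inl a) \<or> (\<exists>z. x = Inr (e,z))}"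
  unfolding NcC_def
proof (intro Collect_cong conj_cong refl)
  fix x show "(x = Inr (e, y) \<or> adjC (Inr (e, y)) x) = ((\<exists>a\<in>e. x = Inl a) \<or> (\<exists>z. x = Inr (e, z)))"
  proof (cases x)
    case (Inl a) then show ?thesis by auto
  next
    case (Inr q) then show ?thesis by (cases q) auto
  qed
qed

lemma NcC_Inr_eq: "NcC m n (Inr (e,y)) = NcC m n (Inr (e,y'))"
  unfolding NcC_Inr ..

lemma Inl_in_NcC: "a < m \<Longrightarrow> b < m \<Longrightarrow> Inl b \<in> NcC m n (Inl a)"
  unfolding NcC_def by auto

locale LB =
  fixes m n k :: nat and c :: "cv \<Rightarrow> nat"
  assumes m3: "3 \<le> m" and n2: "2 \<le> n" and loc: "locating_rainbow_coloring (GC m n) k c"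
begin

abbreviation "V \<equiv> verts (GC m n)"
abbreviation "sd i v \<equiv> setdist (GC m n) v (color_class (GC m n) c i)"

lemma crange: "v \<in> V \<Longrightarrow> c v \<in> {1..k}"
  using loc unfolding locating_rainbow_coloring_def rainbow_vertex_coloring_def by blast

lemma cinj: "u \<in> V \<Longrightarrow> v \<in> V \<Longrightarrow> (\<forall>i\<in>{1..k}. sd i u = sd i v) \<Longrightarrow> u = v"
  using loc unfolding locating_rainbow_coloring_def inj_on_def code_eq_iff by blast

lemma sd_same_Nc: "u \<in> V \<Longrightarrow> v \<in> V \<Longrightarrow> c u = c v \<Longrightarrow> NcC m n u = NcC m n v \<Longrightarrow> sd i u = sd i v"
  by (simp add: sdN)

lemma copy_inj: assumes "e \<in> Em m" "y < n" "y' < n" "c (Inr (e,y)) = c (Inr (e,y'))" shows "y = y'"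
proof -
  have "\<forall>i\<in>{1..k}. sd i (Inr (e,y)) = sd i (Inr (e,y'))"
    using sd_same_Nc[of "Inr (e,y)" "Inr (e,y')"] assms NcC_Inr_eq by simp
  then have "Inr (e,y) = (Inr (e,y') :: cv)" using cinj[of "Inr (e,y)" "Inr (e,y')"] assms by simp
  then show ?thesis by simp
qed

lemma codeU: assumes v: "v \<in> V" and cv: "c v = i0"
  and nb: "\<And>l. l \<in> {1..k} \<Longrightarrow> l \<noteq> i0 \<Longrightarrow> \<exists>x\<in>V. adjC v x \<and> c x = l"
  shows "l \<in> {1..k} \<Longrightarrow> sd l v = (if l = i0 then 0 else 1)"
proof -
  assume l: "l \<in> {1..k}"
  show ?thesis
  proof (cases "l = i0")
    case True then show ?thesis using sd0_iff[OF v] cv by simp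
  next
    case False
    then obtain x where "x \<in> V" "adjC v x" "c x = l" using nb[OF l] by blast
    then show ?thesis using sd1[OF v] cv False by simp
  qed
qed

lemma sameU: assumes "u \<in> V" "v \<in> V" "c u = i0" "c v = i0"
  and "\<And>l. l \<in> {1..k} \<Longrightarrow> l \<noteq> i0 \<Longrightarrow> \<exists>x\<in>V. adjC u x \<and> c x = l"
  and "\<And>l. l \<in> {1..k} \<Longrightarrow> l \<noteq> i0 \<Longrightarrow> \<exists>x\<in>V. adjC v x \<and> c x = l"
  shows "u = v"
proof -
  have "\<forall>l\<in>{1..k}. sd l u = sd l v"
    using codeU[OF assms(1,3,5)] codeU[OF assms(2,4,6)] by simp
  then show ?thesis using cinj assms(1,2) by blast
qed

definition img :: "nat set \<Rightarrow> nat set" where "img e = (\<lambda>y. c (Inr (e,y))) ` {0..<n}"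

lemma img_inj: assumes e: "e \<in> Em m" shows "inj_on (\<lambda>y. c (Inr (e,y))) {0..<n}"
proof (rule inj_onI)
  fix y y' assume "y \<in> {0..<n}" "y' \<in> {0..<n}" "c (Inr (e,y)) = c (Inr (e,y'))"
  then show "y = y'" using copy_inj[OF e] by simp
qed

lemma img_card: "e \<in> Em m \<Longrightarrow> card (img e) = n"
  unfolding img_def using img_inj by (simp add: card_image)

lemma img_sub: "e \<in> Em m \<Longrightarrow> img e \<subseteq> {1..k}"
  unfolding img_def using crange by auto

lemma k_ge: "e \<in> Em m \<Longrightarrow> n \<le> k"
  using card_mono[OF finite_atLeastAtMost img_sub] img_card by force

lemma lower1: "n + 1 \<le> k"
proof (rule ccontr)
  assume "\<not> n + 1 \<le> k"
  then have kn: "k \<le> n" by simp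
  have e1: "{0,1} \<in> Em m" and e2: "{0,2} \<in> Em m" using m3 by (auto intro!: Em_pair)
  have full: "img e = {1..k}" if e: "e \<in> Em m" for e
    using card_subset_eq[OF _ img_sub[OF e]] img_card[OF e] kn k_ge[OF e] by simp
  have k1: "1 \<in> {1..k}" using k_ge[OF e1] n2 by simp
  have nbr: "\<exists>x\<in>V. adjC (Inr (e,y)) x \<and> c x = l"
    if e: "e \<in> Em m" and y: "y < n" and l: "l \<in> {1..k}" "l \<noteq> c (Inr (e,y))" for e y l
  proof -
    have "l \<in> (\<lambda>y. c (Inr (e,y))) ` {0..<n}" using l full[OF e] unfolding img_def by simp
    then obtain z where z0: "z \<in> {0..<n}" "l = c (Inr (e,z))" by (rule imageE)
    then have z: "z < n" "c (Inr (e,z)) = l" by auto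
    have "z \<noteq> y" using z l by auto
    then have "Inr (e,z) \<in> V" "adjC (Inr (e,y)) (Inr (e,z))" using z e by auto
    then show ?thesis using z(2) by (intro bexI[of _ "Inr (e,z)"] conjI)
  qed
  have "1 \<in> (\<lambda>y. c (Inr ({0,1},y))) ` {0..<n}" using k1 full[OF e1] unfolding img_def by simp
  then obtain y1 where y10: "y1 \<in> {0..<n}" "1 = c (Inr ({0,1},y1))" by (rule imageE)
  then have y1: "y1 < n" "c (Inr ({0,1},y1)) = 1" by auto
  have "1 \<in> (\<lambda>y. c (Inr ({0,2},y))) ` {0..<n}" using k1 full[OF e2] unfolding img_def by simp
  then obtain y2 where y20: "y2 \<in> {0..<n}" "1 = c (Inr ({0,2},y2))" by (rule imageE)
  then have y2: "y2 < n" "c (Inr ({0,2},y2)) = 1" by auto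
  have "Inr ({0,1},y1) = (Inr ({0,2},y2) :: cv)"
  proof (rule sameU[of _ _ 1])
    show "Inr ({0,1},y1) \<in> V" "Inr ({0,2},y2) \<in> V" using y1 y2 e1 e2 by auto
    show "c (Inr ({0,1},y1)) = 1" "c (Inr ({0,2},y2)) = 1" using y1 y2 by auto
    show "\<exists>x\<in>V. adjC (Inr ({0,1},y1)) x \<and> c x = l" if "l \<in> {1..k}" "l \<noteq> 1" for l
      using nbr[OF e1 y1(1) that(1)] that(2) y1(2) by simp
    show "\<exists>x\<in>V. adjC (Inr ({0,2},y2)) x \<and> c x = l" if "l \<in> {1..k}" "l \<noteq> 1" for l
      using nbr[OF e2 y2(1) that(1)] that(2) y2(2) by simp
  qed
  then have "{0,1} = ({0,2} :: nat set)" by simp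
  then show False by (simp add: doubleton_eq_iff)
qed

end


context LB begin

lemma miss_ex: assumes kk: "k = n + 1" and e: "e \<in> Em m"
  shows "\<exists>s. s \<in> {1..k} \<and> img e = {1..k} - {s}"
proof -
  have fin: "finite (img e)" unfolding img_def by simp
  have "card ({1..k} - img e) = card {1..k} - card (img e)"
    by (rule card_Diff_subset[OF fin img_sub[OF e]])
  also have "\<dots> = 1" using img_card[OF e] kk by simp
  finally obtain s where s: "{1..k} - img e = {s}" by (rule card_1_singletonE)
  have "s \<in> {1..k}" using s by blast
  moreover have "img e = {1..k} - {s}" using s img_sub[OF e] by blast
  ultimately show ?thesis by blast
qed

end

locale LB2 = LB +
  fixes \<sigma> :: "nat set \<Rightarrow> nat"
  assumes kk: "k = n + 1"
    and sig: "\<And>e. e \<in> Em m \<Longrightarrow> \<sigma> e \<in> {1..k} \<and> img e = {1..k} - {\<sigma> e}"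
begin

lemma colors_in: "e \<in> Em m \<Longrightarrow> y < n \<Longrightarrow> c (Inr (e,y)) \<in> {1..k} - {\<sigma> e}"
proof -
  assume "e \<in> Em m" "y < n"
  then have "c (Inr (e,y)) \<in> img e" unfolding img_def by simp
  then show ?thesis using sig[OF \<open>e \<in> Em m\<close>] by simp
qed

lemma colors_all: assumes "e \<in> Em m" "l \<in> {1..k}" "l \<noteq> \<sigma> e" shows "\<exists>z<n. c (Inr (e,z)) = l"
proof -
  have "l \<in> img e" using sig[OF assms(1)] assms(2,3) by simp
  then obtain z where "z \<in> {0..<n}" "l = c (Inr (e,z))" unfolding img_def by (rule imageE)
  then show ?thesis by auto
qed

lemma copy_nbr: assumes e: "e \<in> Em m" and y: "y < n" and l: "l \<in> {1..k}" "l \<noteq> \<sigma> e" "l \<noteq> c (Inr (e,y))"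
  shows "sd l (Inr (e,y)) = 1"
proof -
  obtain z where z: "z < n" "c (Inr (e,z)) = l" using colors_all[OF e l(1,2)] by blast
  have "z \<noteq> y" using z l(3) by auto
  then have vz: "Inr (e,z) \<in> V" and adz: "adjC (Inr (e,y)) (Inr (e,z))" using z e by auto
  have vy: "Inr (e,y) \<in> V" using e y by simp
  show ?thesis using sd1[where c=c and i=l, OF vy _ vz adz z(2)] l(3) by simp
qed

lemma nontype: assumes e: "e \<in> Em m" and a: "a \<in> e" shows "c (Inl a) \<noteq> \<sigma> e"
proof
  assume ca: "c (Inl a) = \<sigma> e"
  obtain b where b: "b \<in> e" "b \<noteq> a" using Em_other[OF e a] by blast
  have am: "a < m" and bm: "b < m" using Em_sub[OF e] a b by auto
  define i where "i = c (Inl b)"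
  have nbB: "\<exists>x\<in>V. adjC (Inl b) x \<and> c x = l" if l: "l \<in> {1..k}" "l \<noteq> i" for l
  proof (cases "l = \<sigma> e")
    case True
    have "Inl a \<in> V" "adjC (Inl b) (Inl a)" "c (Inl a) = l" using am b True ca by auto
    then show ?thesis by (intro bexI[of _ "Inl a"] conjI)
  next
    case False
    obtain z where z: "z < n" "c (Inr (e,z)) = l" using colors_all[OF e l(1) False] by blast
    have "Inr (e,z) \<in> V" "adjC (Inl b) (Inr (e,z))" using z e b by auto
    then show ?thesis using z(2) by (intro bexI[of _ "Inr (e,z)"] conjI)
  qed
  show False
  proof (cases "i = \<sigma> e")
    case True
    have nbA: "\<exists>x\<in>V. adjC (Inl a) x \<and> c x = l" if l: "l \<in> {1..k}" "l \<noteq> i" for l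
    proof -
      obtain z where z: "z < n" "c (Inr (e,z)) = l" using colors_all[OF e l(1)] l(2) True by blast
      have "Inr (e,z) \<in> V" "adjC (Inl a) (Inr (e,z))" using z e a by auto
      then show ?thesis using z(2) by (intro bexI[of _ "Inr (e,z)"] conjI)
    qed
    have "Inl a = (Inl b :: cv)"
      by (rule sameU[of _ _ i]) (use am bm ca True i_def nbA nbB in auto)
    then show False using b by simp
  next
    case False
    have ik: "i \<in> {1..k}" using crange bm i_def by simp
    obtain z0 where z0: "z0 < n" "c (Inr (e,z0)) = i" using colors_all[OF e ik False] by blast
    have nbZ: "\<exists>x\<in>V. adjC (Inr (e,z0)) x \<and> c x = l" if l: "l \<in> {1..k}" "l \<noteq> i" for l
    proof (cases "l = \<sigma> e")
      case True
      have "Inl a \<in> V" "adjC (Inr (e,z0)) (Inl a)" "c (Inl a) = l" using am a True ca by auto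
      then show ?thesis by (intro bexI[of _ "Inl a"] conjI)
    next
      case F: False
      obtain z where z: "z < n" "c (Inr (e,z)) = l" using colors_all[OF e l(1) F] by blast
      have "z \<noteq> z0" using z z0 l(2) by auto
      then have "Inr (e,z) \<in> V" "adjC (Inr (e,z0)) (Inr (e,z))" using z e by auto
      then show ?thesis using z(2) by (intro bexI[of _ "Inr (e,z)"] conjI)
    qed
    have "Inl b = (Inr (e,z0) :: cv)"
      by (rule sameU[of _ _ i]) (use bm e z0 i_def nbB nbZ in auto)
    then show False by simp
  qed
qed

definition Q :: "nat \<Rightarrow> nat set \<Rightarrow> bool" where
  "Q j g \<longleftrightarrow> (\<exists>a\<in>g. \<exists>x\<in>NcC m n (Inl a). c x = j)"

lemma Xval: assumes g: "g \<in> Em m" and y: "y < n"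
  shows "sd (\<sigma> g) (Inr (g,y)) = (if Q (\<sigma> g) g then 2 else if (\<exists>x\<in>V. c x = \<sigma> g) then 3 else \<infinity>)"
proof -
  let ?j = "\<sigma> g"
  have v: "Inr (g,y) \<in> V" using g y by simp
  have c0: "c (Inr (g,y)) \<noteq> ?j" using colors_in[OF g y] by simp
  have no1: "\<not> (\<exists>x\<in>NcC m n (Inr (g,y)). c x = ?j)"
  proof
    assume "\<exists>x\<in>NcC m n (Inr (g,y)). c x = ?j"
    then obtain x where x: "x \<in> NcC m n (Inr (g,y))" "c x = ?j" by blast
    then have xv: "x \<in> V" and xx: "(\<exists>a\<in>g. x = Inl a) \<or> (\<exists>z. x = Inr (g,z))" unfolding NcC_Inr by auto
    show False
    proof (cases "\<exists>a\<in>g. x = Inl a")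
      case True
      then obtain a where "a \<in> g" "x = Inl a" by blast
      then show False using nontype[OF g] x(2) by blast
    next
      case False
      then obtain z where z: "x = Inr (g,z)" using xx by blast
      then have "z < n" using xv by simp
      then show False using colors_in[OF g] x(2) z by auto
    qed
  qed
  have two: "(\<exists>w\<in>NcC m n (Inr (g,y)). \<exists>x\<in>NcC m n w. c x = ?j) \<longleftrightarrow> Q ?j g"
  proof
    assume "\<exists>w\<in>NcC m n (Inr (g,y)). \<exists>x\<in>NcC m n w. c x = ?j"
    then obtain w x where w: "w \<in> NcC m n (Inr (g,y))" "x \<in> NcC m n w" "c x = ?j" by blast
    then have wv: "w \<in> V" and ww: "(\<exists>a\<in>g. w = Inl a) \<or> (\<exists>z. w = Inr (g,z))" unfolding NcC_Inr by auto
    show "Q ?j g"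
    proof (cases "\<exists>a\<in>g. w = Inl a")
      case True
      then obtain a where "a \<in> g" "w = Inl a" by blast
      then show ?thesis unfolding Q_def using w by blast
    next
      case False
      then obtain z where z: "w = Inr (g,z)" using ww by blast
      then have "NcC m n w = NcC m n (Inr (g,y))" using NcC_Inr_eq by simp
      then show ?thesis using no1 w by blast
    qed
  next
    assume "Q ?j g"
    then obtain a x where a: "a \<in> g" "x \<in> NcC m n (Inl a)" "c x = ?j" unfolding Q_def by blast
    have "Inl a \<in> NcC m n (Inr (g,y))" unfolding NcC_Inr using a(1) Em_sub[OF g a(1)] by auto
    then show "\<exists>w\<in>NcC m n (Inr (g,y)). \<exists>x\<in>NcC m n w. c x = ?j" using a by blast
  qed
  show ?thesis
    by (subst sdN[OF v]) (simp only: c0 no1 two if_False)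
qed

lemma collide_sym: assumes e: "e \<in> Em m" and f: "f \<in> Em m" and ef: "e \<noteq> f" and s: "\<sigma> e = \<sigma> f"
  and Qs: "Q (\<sigma> e) e = Q (\<sigma> e) f" shows False
proof -
  let ?j = "\<sigma> e"
  have k3: "3 \<le> k" using kk n2 by simp
  define i where "i = (if ?j = 1 then 2 else (1::nat))"
  have i: "i \<in> {1..k}" "i \<noteq> ?j" using k3 unfolding i_def by auto
  obtain ye where ye: "ye < n" "c (Inr (e,ye)) = i" using colors_all[OF e i(1,2)] by blast
  obtain yf where yf: "yf < n" "c (Inr (f,yf)) = i" using colors_all[OF f i(1)] i(2) s by auto
  have "\<forall>l\<in>{1..k}. sd l (Inr (e,ye)) = sd l (Inr (f,yf))"
  proof
    fix l assume l: "l \<in> {1..k}"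
    show "sd l (Inr (e,ye)) = sd l (Inr (f,yf))"
    proof (cases "l = i")
      case True then show ?thesis using sd0_iff[of "Inr (e,ye)" m n c l] sd0_iff[of "Inr (f,yf)" m n c l] ye yf e f by simp
    next
      case F1: False
      show ?thesis
      proof (cases "l = ?j")
        case True then show ?thesis using Xval[OF e ye(1)] Xval[OF f yf(1)] s Qs by simp
      next
        case False
        then show ?thesis using copy_nbr[OF e ye(1) l] copy_nbr[OF f yf(1) l] F1 ye yf s by simp
      qed
    qed
  qed
  then have "Inr (e,ye) = (Inr (f,yf) :: cv)" using cinj[of "Inr (e,ye)" "Inr (f,yf)"] e f ye yf by simp
  then show False using ef by simp
qed

lemma collide_asym: assumes e: "e \<in> Em m" and f: "f \<in> Em m" and s: "\<sigma> e = \<sigma> f"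
  and Qe: "Q (\<sigma> e) e" and Qf: "\<not> Q (\<sigma> e) f" shows False
proof -
  let ?j = "\<sigma> e"
  obtain a where a: "a \<in> f" using Em_ne[OF f] by blast
  have am: "a < m" using Em_sub[OF f a] .
  define i where "i = c (Inl a)"
  have i: "i \<in> {1..k}" "i \<noteq> ?j" using crange am nontype[OF f a] s i_def by auto
  obtain ye where ye: "ye < n" "c (Inr (e,ye)) = i" using colors_all[OF e i(1,2)] by blast
  have va: "Inl a \<in> V" using am by simp
  have sdA: "sd ?j (Inl a) = 2"
  proof -
    have c0: "c (Inl a) \<noteq> ?j" using i i_def by simp
    have no1: "\<not> (\<exists>x\<in>NcC m n (Inl a). c x = ?j)" using Qf a unfolding Q_def by blast
    obtain a' x where a': "a' \<in> e" "x \<in> NcC m n (Inl a')" "c x = ?j" using Qe unfolding Q_def by blast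
    have "Inl a' \<in> NcC m n (Inl a)" using Inl_in_NcC am Em_sub[OF e a'(1)] by blast
    then have two: "\<exists>w\<in>NcC m n (Inl a). \<exists>x\<in>NcC m n w. c x = ?j" using a' by blast
    show ?thesis by (subst sdN[OF va]) (simp only: c0 no1 two if_False if_True)
  qed
  have "\<forall>l\<in>{1..k}. sd l (Inl a) = sd l (Inr (e,ye))"
  proof
    fix l assume l: "l \<in> {1..k}"
    show "sd l (Inl a) = sd l (Inr (e,ye))"
    proof (cases "l = i")
      case True then show ?thesis using sd0_iff[of "Inl a" m n c l] sd0_iff[of "Inr (e,ye)" m n c l] ye e am i_def by simp
    next
      case F1: False
      show ?thesis
      proof (cases "l = ?j")
        case True then show ?thesis using Xval[OF e ye(1)] sdA Qe by simp
      next
        case False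
        obtain z where z: "z < n" "c (Inr (f,z)) = l" using colors_all[OF f l] False s by auto
        have vz: "Inr (f,z) \<in> V" and adz: "adjC (Inl a) (Inr (f,z))" using z f a by auto
        have "sd l (Inl a) = 1" using sd1[where c=c and i=l, OF va _ vz adz z(2)] F1 i_def by simp
        then show ?thesis using copy_nbr[OF e ye(1) l] F1 False ye by simp
      qed
    qed
  qed
  then have "Inl a = (Inr (e,ye) :: cv)" using cinj[of "Inl a" "Inr (e,ye)"] va e ye by simp
  then show False by simp
qed

lemma no_collide: "e \<in> Em m \<Longrightarrow> f \<in> Em m \<Longrightarrow> e \<noteq> f \<Longrightarrow> \<sigma> e = \<sigma> f \<Longrightarrow> False"
proof -
  assume e: "e \<in> Em m" and f: "f \<in> Em m" and ef: "e \<noteq> f" and s: "\<sigma> e = \<sigma> f"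
  show False
  proof (cases "Q (\<sigma> e) e = Q (\<sigma> e) f")
    case True then show False using collide_sym[OF e f ef s] by blast
  next
    case False
    show False
    proof (cases "Q (\<sigma> e) e")
      case True then show False using collide_asym[OF e f s] False by blast
    next
      case F2: False
      then have "Q (\<sigma> f) f" "\<not> Q (\<sigma> f) e" using False s by auto
      then show False using collide_asym[OF f e s[symmetric]] by blast
    qed
  qed
qed

lemma lower2: "card (Em m) \<le> n + 1"
proof -
  have inj: "inj_on \<sigma> (Em m)" using no_collide by (auto simp: inj_on_def)
  have "\<sigma> ` Em m \<subseteq> {1..k}" using sig by auto
  then have "card (Em m) \<le> card {1..k}" by (rule card_inj_on_le[OF inj _ finite_atLeastAtMost])
  then show ?thesis using kk by simp
qed

end

lemma (in LB) lower2': "k = n + 1 \<Longrightarrow> card (Em m) \<le> n + 1"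
proof -
  assume kk: "k = n + 1"
  have "\<forall>e\<in>Em m. \<exists>s. s \<in> {1..k} \<and> img e = {1..k} - {s}" using miss_ex[OF kk] by blast
  then obtain \<sigma> where "\<forall>e\<in>Em m. \<sigma> e \<in> {1..k} \<and> img e = {1..k} - {\<sigma> e}" by metis
  then interpret LB2 m n k c \<sigma> using kk by unfold_locales auto
  show ?thesis by (rule lower2)
qed


definition nx :: "nat \<Rightarrow> nat \<Rightarrow> nat" where "nx m x = (if Suc x < m then Suc x else 0)"

lemma nx_lt: "x < m \<Longrightarrow> nx m x < m" by (auto simp: nx_def)
lemma nx_inj: "inj_on (nx m) {0..<m}" by (auto simp: inj_on_def nx_def split: if_splits)
lemma nx_eq: "x < m \<Longrightarrow> y < m \<Longrightarrow> nx m x = nx m y \<longleftrightarrow> x = y"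
  by (auto simp: nx_def split: if_splits)
lemma nx_ne: "2 \<le> m \<Longrightarrow> x < m \<Longrightarrow> nx m x \<noteq> x" by (auto simp: nx_def)
lemma nx2_ne: "3 \<le> m \<Longrightarrow> x < m \<Longrightarrow> nx m (nx m x) \<noteq> x" by (auto simp: nx_def)
lemma nx3_ne: "4 \<le> m \<Longrightarrow> x < m \<Longrightarrow> nx m (nx m (nx m x)) \<noteq> x" by (auto simp: nx_def)

lemma doubleton_same_fst: assumes eq: "{x, a} = {x, b}" and ne: "a \<noteq> x" shows "a = b"
proof -
  have "a \<in> {x, a}" by simp
  then have "a \<in> {x, b}" by (simp only: eq)
  then show ?thesis using ne by simp
qed

lemma constr1:
  assumes m3: "3 \<le> m" and t: "card (Em m) \<le> n + 1"
  shows "\<exists>c. locating_rainbow_coloring (GC m n) (n + 1) c"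
proof -
  obtain \<sigma> where \<sigma>: "\<sigma> ` Em m \<subseteq> {1..n+1}" "inj_on \<sigma> (Em m)"
    using card_le_inj[OF finite_Em finite_atLeastAtMost, of m 1 "n+1"] t by auto
  define ed where "ed x = {nx m x, nx m (nx m x)}" for x
  have m2: "2 \<le> m" using m3 by simp
  have ed_in: "ed x \<in> Em m" if x: "x < m" for x
    unfolding ed_def using nx_lt[OF x] nx_lt[OF nx_lt[OF x]] nx_ne[OF m2 nx_lt[OF x]]
    by (intro Em_pair) auto
  have ed_notin: "x \<notin> ed x" if x: "x < m" for x
    unfolding ed_def using nx_ne[OF m2 x] nx2_ne[OF m3 x] by auto
  define \<kappa> where "\<kappa> x = \<sigma> (ed x)" for x
  define P where "P e = {\<sigma> e}" for e :: "nat set"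
  have sig_eq: "\<sigma> e = \<sigma> f \<longleftrightarrow> e = f" if "e \<in> Em m" "f \<in> Em m" for e f
    using \<sigma>(2) that by (auto simp: inj_on_def)
  have kinj: "inj_on \<kappa> {0..<m}"
  proof (rule inj_onI)
    fix a b assume a: "a \<in> {0..<m}" and b: "b \<in> {0..<m}" and eq: "\<kappa> a = \<kappa> b"
    then have am: "a < m" and bm: "b < m" by auto
    have "ed a = ed b" using eq sig_eq[OF ed_in[OF am] ed_in[OF bm]] unfolding \<kappa>_def by simp
    then have "(nx m a = nx m b \<and> nx m (nx m a) = nx m (nx m b)) \<or> (nx m a = nx m (nx m b) \<and> nx m (nx m a) = nx m b)"
      unfolding ed_def by (simp add: doubleton_eq_iff)
    then show "a = b"
    proof
      assume "nx m a = nx m b \<and> nx m (nx m a) = nx m (nx m b)"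
      then show "a = b" using nx_eq am bm by blast
    next
      assume h: "nx m a = nx m (nx m b) \<and> nx m (nx m a) = nx m b"
      then have "a = nx m b" using nx_eq[OF am nx_lt[OF bm]] by blast
      moreover have "nx m a = b" using h nx_eq[OF nx_lt[OF am] bm] by blast
      ultimately have "nx m (nx m b) = b" by simp
      then show "a = b" using nx2_ne[OF m3 bm] by blast
    qed
  qed
  have kran: "\<kappa> x \<in> {1..n+1}" if "x < m" for x
    using \<sigma>(1) ed_in[OF that] unfolding \<kappa>_def by auto
  have Psub: "P e \<subseteq> {1..n+1}" if "e \<in> Em m" for e using \<sigma>(1) that unfolding P_def by auto
  have Pcard: "card ({1..n+1} - P e) = n" if "e \<in> Em m" for e
    using \<sigma>(1) that unfolding P_def by (subst card_Diff_singleton) auto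
  have M: "P e - \<kappa> ` e = {\<sigma> e}" if e: "e \<in> Em m" for e
  proof -
    have "\<sigma> e \<notin> \<kappa> ` e"
    proof
      assume "\<sigma> e \<in> \<kappa> ` e"
      then obtain a where a: "a \<in> e" "\<sigma> e = \<sigma> (ed a)" unfolding \<kappa>_def by blast
      have am: "a < m" using Em_sub[OF e a(1)] .
      have "e = ed a" using a(2) sig_eq[OF e ed_in[OF am]] by simp
      then show False using ed_notin[OF am] a(1) by simp
    qed
    then show ?thesis unfolding P_def by auto
  qed
  have Mne: "P e - \<kappa> ` e \<noteq> {}" if "e \<in> Em m" for e using M[OF that] by simp
  have Minj: "inj_on (\<lambda>e. P e - \<kappa> ` e) (Em m)"
  proof (rule inj_onI)
    fix e f assume e: "e \<in> Em m" and f: "f \<in> Em m" and eq: "P e - \<kappa> ` e = P f - \<kappa> ` f"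
    then have "{\<sigma> e} = {\<sigma> f}" using M[OF e] M[OF f] by simp
    then have "\<sigma> e = \<sigma> f" by simp
    then show "e = f" using sig_eq[OF e f] by simp
  qed
  have cover: "l \<in> \<kappa> ` {0..<m} \<or> (\<exists>e\<in>Em m. x \<in> e \<and> l \<notin> P e)" if x: "x < m" and l: "l \<in> {1..n+1}" for x l
  proof -
    have x1: "nx m x < m" using nx_lt[OF x] .
    have x2: "nx m (nx m x) < m" using nx_lt[OF x1] .
    have e1: "{x, nx m x} \<in> Em m" using Em_pair[OF x x1] nx_ne[OF m2 x] by auto
    have e2: "{x, nx m (nx m x)} \<in> Em m" using Em_pair[OF x x2] nx2_ne[OF m3 x] by auto
    have "{x, nx m x} \<noteq> {x, nx m (nx m x)}"
      using doubleton_same_fst[of x "nx m x" "nx m (nx m x)"] nx_ne[OF m2 x] nx_ne[OF m2 x1] by auto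
    then have "\<sigma> {x, nx m x} \<noteq> \<sigma> {x, nx m (nx m x)}" using sig_eq[OF e1 e2] by simp
    then have "l \<notin> P {x, nx m x} \<or> l \<notin> P {x, nx m (nx m x)}" unfolding P_def by auto
    then show ?thesis using e1 e2 by blast
  qed
  have "locating_rainbow_coloring (GC m n) (n+1) (colC \<kappa> P (n+1))"
    by (rule construction[OF kinj kran Psub Pcard Mne Minj cover])
  then show ?thesis by blast
qed


lemma constr2:
  assumes m4: "4 \<le> m" and mn: "m \<le> n"
  shows "\<exists>c. locating_rainbow_coloring (GC m n) (n + 2) c"
proof -
  have m2: "2 \<le> m" and m3: "3 \<le> m" using m4 by auto
  define rot where "rot e = nx m ` e" for e
  define cyc where "cyc e \<longleftrightarrow> rot e \<inter> e \<noteq> {}" for e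
  define P where "P e = Suc ` (rot e - e) \<union> (if cyc e then {Suc m} else {})" for e
  have esub: "e \<subseteq> {0..<m}" if "e \<in> Em m" for e using Em_sub[OF that] by auto
  have rsub: "rot e \<subseteq> {0..<m}" if e: "e \<in> Em m" for e
  proof
    fix y assume "y \<in> rot e"
    then obtain x where x: "x \<in> e" "y = nx m x" unfolding rot_def by blast
    have "x < m" using Em_sub[OF e x(1)] .
    then show "y \<in> {0..<m}" using x(2) nx_lt by simp
  qed
  have cyc_form: "\<exists>a<m. e = {a, nx m a}" if e: "e \<in> Em m" and ce: "cyc e" for e
  proof -
    obtain a b where ab: "e = {a,b}" "a < m" "b < m" "a \<noteq> b" using e by (auto simp: Em_iff)
    have "rot e = {nx m a, nx m b}" unfolding rot_def ab(1) by simp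
    then have "{nx m a, nx m b} \<inter> {a,b} \<noteq> {}" using ce unfolding cyc_def ab(1) by simp
    then have "nx m a \<in> {a,b} \<or> nx m b \<in> {a,b}" by blast
    then have "nx m a = b \<or> nx m b = a" using nx_ne[OF m2 ab(2)] nx_ne[OF m2 ab(3)] by blast
    then show ?thesis
    proof
      assume "nx m a = b" then show ?thesis using ab by blast
    next
      assume "nx m b = a" then have "e = {b, nx m b}" using ab by auto
      then show ?thesis using ab by blast
    qed
  qed
  have cyc_diff: "rot {a, nx m a} - {a, nx m a} = {nx m (nx m a)}" if a: "a < m" for a
  proof -
    have "rot {a, nx m a} = {nx m a, nx m (nx m a)}" unfolding rot_def by simp
    moreover have "nx m (nx m a) \<noteq> a" using nx2_ne[OF m3 a] .
    moreover have "nx m (nx m a) \<noteq> nx m a" using nx_ne[OF m2 nx_lt[OF a]] .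
    ultimately show ?thesis by auto
  qed
  have rot2: "card (rot e) = 2" if e: "e \<in> Em m" for e
  proof -
    obtain a b where ab: "e = {a,b}" "a < m" "b < m" "a \<noteq> b" using e by (auto simp: Em_iff)
    have "rot e = {nx m a, nx m b}" unfolding rot_def ab(1) by simp
    moreover have "nx m a \<noteq> nx m b" using nx_eq[OF ab(2,3)] ab(4) by simp
    ultimately show ?thesis by simp
  qed
  have SucNotm: "Suc m \<notin> Suc ` (rot e - e)" if e: "e \<in> Em m" for e
    using rsub[OF e] by auto
  have Pcard2: "card (P e) = 2" if e: "e \<in> Em m" for e
  proof (cases "cyc e")
    case True
    then obtain a where a: "a < m" "e = {a, nx m a}" using cyc_form[OF e] by blast
    have "P e = {Suc (nx m (nx m a)), Suc m}" unfolding P_def using True cyc_diff[OF a(1)] a(2) by (simp add: insert_commute)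
    moreover have "nx m (nx m a) < m" using nx_lt[OF nx_lt[OF a(1)]] .
    ultimately show ?thesis by simp
  next
    case False
    then have "P e = Suc ` rot e" unfolding P_def cyc_def by auto
    then show ?thesis using rot2[OF e] by (simp add: card_image)
  qed
  have Psub: "P e \<subseteq> {1..n+2}" if e: "e \<in> Em m" for e
    using rsub[OF e] mn unfolding P_def by auto
  have Pcard: "card ({1..n+2} - P e) = n" if e: "e \<in> Em m" for e
    using card_Diff_subset[OF _ Psub[OF e]] Pcard2[OF e] card.infinite[of "P e"] by fastforce
  have M: "P e - Suc ` e = P e" if e: "e \<in> Em m" for e
    using esub[OF e] unfolding P_def by auto
  have Mne: "P e - Suc ` e \<noteq> {}" if e: "e \<in> Em m" for e
    using M[OF e] Pcard2[OF e] by auto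
  have cycP: "cyc e \<longleftrightarrow> Suc m \<in> P e" if e: "e \<in> Em m" for e
    using SucNotm[OF e] unfolding P_def by auto
  have SucP: "Suc ` (rot e - e) = P e - {Suc m}" if e: "e \<in> Em m" for e
    using SucNotm[OF e] unfolding P_def by auto
  have Minj: "inj_on (\<lambda>e. P e - Suc ` e) (Em m)"
  proof (rule inj_onI)
    fix e f assume e: "e \<in> Em m" and f: "f \<in> Em m" and eq0: "P e - Suc ` e = P f - Suc ` f"
    have eq: "P e = P f" using eq0 M[OF e] M[OF f] by simp
    have cc: "cyc e \<longleftrightarrow> cyc f" using cycP[OF e] cycP[OF f] eq by simp
    have "Suc ` (rot e - e) = Suc ` (rot f - f)" using SucP[OF e] SucP[OF f] eq by simp
    then have rd: "rot e - e = rot f - f" by (simp add: inj_image_eq_iff)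
    show "e = f"
    proof (cases "cyc e")
      case True
      then obtain a where a: "a < m" "e = {a, nx m a}" using cyc_form[OF e] by blast
      obtain b where b: "b < m" "f = {b, nx m b}" using cyc_form[OF f] cc True by blast
      have "{nx m (nx m a)} = {nx m (nx m b)}" using rd cyc_diff[OF a(1)] cyc_diff[OF b(1)] a(2) b(2) by simp
      then have "nx m (nx m a) = nx m (nx m b)" by simp
      then have "nx m a = nx m b" using nx_eq[OF nx_lt[OF a(1)] nx_lt[OF b(1)]] by simp
      then have "a = b" using nx_eq[OF a(1) b(1)] by simp
      then show ?thesis using a b by simp
    next
      case False
      then have "rot e = rot f" using rd cc unfolding cyc_def by auto
      then have "nx m ` e = nx m ` f" unfolding rot_def .
      then show ?thesis using inj_on_image_eq_iff[OF nx_inj esub[OF e] esub[OF f]] by simp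
    qed
  qed
  have kinj: "inj_on Suc {0..<m}" by simp
  have kran: "Suc x \<in> {1..n+2}" if "x < m" for x using that mn by simp
  have cover: "l \<in> Suc ` {0..<m} \<or> (\<exists>e\<in>Em m. x \<in> e \<and> l \<notin> P e)" if x: "x < m" and l: "l \<in> {1..n+2}" for x l
  proof (cases "l \<le> m")
    case True
    then have "l = Suc (l - 1)" "l - 1 < m" using l by auto
    then show ?thesis by (metis atLeastLessThan_iff image_eqI zero_le)
  next
    case F1: False
    show ?thesis
    proof (cases "l = Suc m")
      case True
      define e where "e = {x, nx m (nx m x)}"
      have x1: "nx m x < m" using nx_lt[OF x] .
      have x2: "nx m (nx m x) < m" using nx_lt[OF x1] .
      have x3: "nx m (nx m (nx m x)) < m" using nx_lt[OF x2] .
      have eE: "e \<in> Em m" unfolding e_def using Em_pair[OF x x2] nx2_ne[OF m3 x] by auto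
      have "rot e = {nx m x, nx m (nx m (nx m x))}" unfolding rot_def e_def by simp
      moreover have "nx m x \<noteq> x" using nx_ne[OF m2 x] .
      moreover have "nx m x \<noteq> nx m (nx m x)" using nx_ne[OF m2 x1] by simp
      moreover have "nx m (nx m (nx m x)) \<noteq> x" using nx3_ne[OF m4 x] .
      moreover have "nx m (nx m (nx m x)) \<noteq> nx m (nx m x)" using nx_ne[OF m2 x2] .
      ultimately have "rot e \<inter> e = {}" unfolding e_def by auto
      then have "\<not> cyc e" unfolding cyc_def by simp
      then have "l \<notin> P e" using cycP[OF eE] True by simp
      moreover have "x \<in> e" unfolding e_def by simp
      ultimately show ?thesis using eE by blast
    next
      case False
      define e where "e = {x, nx m x}"
      have eE: "e \<in> Em m" unfolding e_def using Em_pair[OF x nx_lt[OF x]] nx_ne[OF m2 x] by auto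
      have "P e \<subseteq> {1..Suc m}" using rsub[OF eE] unfolding P_def by auto
      then have "l \<notin> P e" using F1 False by auto
      moreover have "x \<in> e" unfolding e_def by simp
      ultimately show ?thesis using eE by blast
    qed
  qed
  have "locating_rainbow_coloring (GC m n) (n+2) (colC Suc P (n+2))"
    by (rule construction[OF kinj kran Psub Pcard Mne Minj cover])
  then show ?thesis by blast
qed


lemma card3: "card {a, b, c :: 'a} \<le> 3"
  by (auto simp: card_insert_if)

lemma card_Em3: "card (Em 3) \<le> 3"
proof -
  have "Em 3 \<subseteq> {{0,1},{0,2},{1,2}}"
  proof
    fix e assume "e \<in> Em 3"
    then obtain i j where ij: "e = {i,j}" "i < 3" "j < 3" "i \<noteq> j" by (auto simp: Em_iff)
    have "i = 0 \<or> i = 1 \<or> i = 2" "j = 0 \<or> j = 1 \<or> j = 2" using ij by arith+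
    then show "e \<in> {{0,1},{0,2},{1,2}}" using ij by (elim disjE) (simp_all add: insert_commute)
  qed
  then have "card (Em 3) \<le> card {{0,1},{0,2},{1,2::nat}}" by (rule card_mono[rotated]) simp
  then show ?thesis using card3[of "{0,1}" "{0,2}" "{1,2::nat}"] by linarith
qed

theorem theorem9:
  fixes m n :: nat
  assumes "m \<ge> 3" and "n \<ge> 2" and "m \<le> n"
  shows "rvcl (edge_corona (complete_graph m) (complete_graph n)) =
           (if n \<ge> card (edges (complete_graph m)) - 1 then n + 1 else n + 2)"
proof -
  have lb1: "n + 1 \<le> k" if h: "locating_rainbow_coloring (GC m n) k c" for k c
  proof -
    interpret LB m n k c using assms(1,2) h by unfold_locales auto
    show ?thesis by (rule lower1)
  qed
  have lb2: "card (Em m) \<le> n + 1" if h: "locating_rainbow_coloring (GC m n) (n + 1) c" for c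
  proof -
    interpret LB m n "n + 1" c using assms(1,2) h by unfold_locales auto
    show ?thesis by (rule lower2') simp
  qed
  show ?thesis
  proof (cases "n \<ge> card (Em m) - 1")
    case True
    then have t: "card (Em m) \<le> n + 1" by simp
    obtain c where c: "locating_rainbow_coloring (GC m n) (n + 1) c" using constr1[OF assms(1) t] by blast
    have "rvcl (GC m n) = n + 1" unfolding rvcl_def
    proof (rule Least_equality)
      show "\<exists>c. locating_rainbow_coloring (GC m n) (n + 1) c" using c by blast
      show "\<And>y. \<exists>c. locating_rainbow_coloring (GC m n) y c \<Longrightarrow> n + 1 \<le> y" using lb1 by blast
    qed
    then show ?thesis using True by simp
  next
    case False
    then have t: "n + 1 < card (Em m)" by simp
    have m4: "4 \<le> m"
    proof (rule ccontr)
      assume "\<not> 4 \<le> m"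
      then have "m = 3" using assms(1) by simp
      then show False using card_Em3 t assms(2) by simp
    qed
    obtain c where c: "locating_rainbow_coloring (GC m n) (n + 2) c" using constr2[OF m4 assms(3)] by blast
    have "rvcl (GC m n) = n + 2" unfolding rvcl_def
    proof (rule Least_equality)
      show "\<exists>c. locating_rainbow_coloring (GC m n) (n + 2) c" using c by blast
      fix y assume "\<exists>c. locating_rainbow_coloring (GC m n) y c"
      then obtain d where d: "locating_rainbow_coloring (GC m n) y d" by blast
      have "n + 1 \<le> y" using lb1[OF d] .
      moreover have "y \<noteq> n + 1" using lb2 d t by fastforce
      ultimately show "n + 2 \<le> y" by simp
    qed
    then show ?thesis using False by simp
  qed
qed


end
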